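(* Every metric space $X$ with finite APC-decomposition complexity has straight finite decomposition complexity (i.e. the family $\{X\}$ has straight finite decomposition complexity).
   Context: A family $\mathcal{U}$ of metric subspaces of $(X,d)$ is $r$-disjoint if $d(x,y)>r$ whenever $x\in U$, $y\in U'$, $U\neq U'$ in $\mathcal{U}$. For families $\mathcal{X},\mathcal{Y}$ and $R\in\mathbb{R}^{\mathbb{N}}$, $\mathcal{X}\xrightarrow{R}\mathcal{Y}$ means: there is an integer $k$ such that for each $X\in\mathcal{X}$ there are subcollections $\mathcal{U}_1,\dots,\mathcal{U}_k\subseteq\mathcal{Y}$ of subspaces of $X$, each $\mathcal{U}_i$ being $R_i$-disjoint, with $\bigcup_i\mathcal{U}_i$ covering $X$. A family is bounded if the diameters of its members are uniformly bounded. $\mathfrak{C}_0$ is the class of bounded families; for an ordinal $\alpha>0$, $\mathfrak{C}_\alpha$ is the class of families $\mathcal{X}$ such that for every $R\in\mathbb{R}^{\mathbb{N}}$ there exist $\beta<\alpha$ and $\mathcal{Y}\in\mathfrak{C}_\beta$ with $\mathcal{X}\xrightarrow{R}\mathcal{Y}$. A metric space has finite APC-decomposition complexity if it is a member of some family belonging to $\mathfrak{C}_\alpha$ for some ordinal $\alpha$. For $r>0$, a family $\mathcal{X}$ is $r$-decomposable over a family $\mathcal{Y}$ if every $X\in\mathcal{X}$ can be written as $X=X_0\cup X_1$ where each $X_j$ is the union of an $r$-disjoint collection of subspaces, each belonging to $\mathcal{Y}$. A family $\mathcal{X}$ has straight finite decomposition complexity if for every $(R_i)_{i\in\mathbb{N}}\in\mathbb{R}^{\mathbb{N}}$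 there exist $k\in\mathbb{N}$ and families $\mathcal{X}_1,\dots,\mathcal{X}_k$ such that, with $\mathcal{X}_0=\mathcal{X}$, $\mathcal{X}_{i-1}$ is $R_i$-decomposable over $\mathcal{X}_i$ for every $i\in\{1,\dots,k\}$, and $\mathcal{X}_k$ is bounded. *)

theory Defs
  imports "HOL-Analysis.Analysis"
begin

text \<open>Metric spaces are modelled as subsets of a fixed ambient metric space (M,d);
 a family of metric spaces is a set of subsets of M (each with the restricted metric).\<close>

definition r_disjoint :: "('a \<Rightarrow> 'a \<Rightarrow> real) \<Rightarrow> real \<Rightarrow> 'a set set \<Rightarrow> bool" where
  "r_disjoint d r \<U> \<longleftrightarrow>
     (\<forall>U\<in>\<U>. \<forall>U'\<in>\<U>. U \<noteq> U' \<longrightarrow> (\<forall>x\<in>U. \<forall>y\<in>U'. d x y > r))"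

definition bounded_family :: "('a \<Rightarrow> 'a \<Rightarrow> real) \<Rightarrow> 'a set set \<Rightarrow> bool" where
  "bounded_family d \<X> \<longleftrightarrow> (\<exists>B. \<forall>X\<in>\<X>. \<forall>x\<in>X. \<forall>y\<in>X. d x y \<le> B)"

text \<open>X -R-> Y; sequences R are indexed from 1, i.e. R_i = R i.\<close>
definition decomp_arrow :: "('a \<Rightarrow> 'a \<Rightarrow> real) \<Rightarrow> 'a set set \<Rightarrow> (nat \<Rightarrow> real) \<Rightarrow> 'a set set \<Rightarrow> bool" where
  "decomp_arrow d \<X> R \<Y> \<longleftrightarrow>
     (\<exists>k::nat. \<forall>X\<in>\<X>. \<exists>\<U> :: nat \<Rightarrow> 'a set set.
        (\<forall>i\<in>{1..k}. \<U> i \<subseteq> \<Y> \<and> (\<forall>V\<in>\<U> i. V \<subseteq> X) \<and> r_disjoint d (R i) (\<U> i))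
        \<and> \<Union>(\<Union>i\<in>{1..k}. \<U> i) = X)"

text \<open>APC d M \<X> holds iff \<X> belongs to \<C>_\<alpha> for some ordinal \<alpha>:
 the union over all ordinals of the transfinite hierarchy is the least class containing
 the bounded families and closed under the successor step.\<close>
inductive APC :: "'a set \<Rightarrow> ('a \<Rightarrow> 'a \<Rightarrow> real) \<Rightarrow> 'a set set \<Rightarrow> bool"
  for M d where
  bounded: "\<X> \<subseteq> Pow M \<Longrightarrow> bounded_family d \<X> \<Longrightarrow> APC M d \<X>"
| step: "\<X> \<subseteq> Pow M \<Longrightarrow>
         (\<And>R::nat \<Rightarrow> real. \<exists>\<Y>. \<Y> \<subseteq> Pow M \<and> APC M d \<Y> \<and> decomp_arrow d \<X> R \<Y>)
         \<Longrightarrow> APC M d \<X>"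

definition finite_APC_complexity :: "'a set \<Rightarrow> ('a \<Rightarrow> 'a \<Rightarrow> real) \<Rightarrow> 'a set \<Rightarrow> bool" where
  "finite_APC_complexity M d X \<longleftrightarrow> (\<exists>\<X>. \<X> \<subseteq> Pow M \<and> X \<in> \<X> \<and> APC M d \<X>)"

definition r_decomposable :: "('a \<Rightarrow> 'a \<Rightarrow> real) \<Rightarrow> real \<Rightarrow> 'a set set \<Rightarrow> 'a set set \<Rightarrow> bool" where
  "r_decomposable d r \<X> \<Y> \<longleftrightarrow>
     (\<forall>X\<in>\<X>. \<exists>X0 X1. X = X0 \<union> X1 \<and>
        (\<exists>\<U>. \<U> \<subseteq> \<Y> \<and> r_disjoint d r \<U> \<and> X0 = \<Union>\<U>) \<and>
        (\<exists>\<U>. \<U> \<subseteq> \<Y> \<and> r_disjoint d r \<U> \<and> X1 = \<Union>\<U>))"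

definition straight_FDC :: "'a set \<Rightarrow> ('a \<Rightarrow> 'a \<Rightarrow> real) \<Rightarrow> 'a set set \<Rightarrow> bool" where
  "straight_FDC M d \<X> \<longleftrightarrow>
     (\<forall>R::nat \<Rightarrow> real. \<exists>k::nat. \<exists>F :: nat \<Rightarrow> 'a set set.
        F 0 = \<X> \<and> (\<forall>i\<le>k. F i \<subseteq> Pow M) \<and>
        (\<forall>i\<in>{1..k}. r_decomposable d (R i) (F (i - 1)) (F i)) \<and>
        bounded_family d (F k))"

end

theory Submission
  imports Defs
begin

definition sf :: "'a set \<Rightarrow> ('a \<Rightarrow> 'a \<Rightarrow> real) \<Rightarrow> 'a set set \<Rightarrow> (nat \<Rightarrow> real) \<Rightarrow> bool" where
  "sf M d \<X> R \<longleftrightarrow> (\<exists>k::nat. \<exists>F :: nat \<Rightarrow> 'a set set.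
        F 0 = \<X> \<and> (\<forall>i\<le>k. F i \<subseteq> Pow M) \<and>
        (\<forall>i\<in>{1..k}. r_decomposable d (R i) (F (i - 1)) (F i)) \<and>
        bounded_family d (F k))"

definition Dk :: "('a \<Rightarrow> 'a \<Rightarrow> real) \<Rightarrow> nat \<Rightarrow> (nat \<Rightarrow> real) \<Rightarrow> 'a set set \<Rightarrow> 'a set set \<Rightarrow> bool" where
  "Dk d k R \<X> \<Y> \<longleftrightarrow> (\<forall>X\<in>\<X>. \<exists>U :: nat \<Rightarrow> 'a set set.
      (\<forall>i\<in>{1..k}. U i \<subseteq> \<Y> \<and> r_disjoint d (R i) (U i)) \<and> \<Union>(\<Union>i\<in>{1..k}. U i) = X)"

lemma sf_bounded: "\<X> \<subseteq> Pow M \<Longrightarrow> bounded_family d \<X> \<Longrightarrow> sf M d \<X> R"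
  unfolding sf_def by (rule exI[of _ 0], rule exI[of _ "\<lambda>_. \<X>"]) auto

lemma sf_compose:
  assumes "r_decomposable d (R 1) \<X> \<Y>" "\<X> \<subseteq> Pow M" "sf M d \<Y> (\<lambda>i. R (Suc i))"
  shows "sf M d \<X> R"
proof -
  obtain k F where F: "F 0 = \<Y>" "\<forall>i\<le>k. F i \<subseteq> Pow M"
    "\<forall>i\<in>{1..k}. r_decomposable d (R (Suc i)) (F (i - 1)) (F i)" "bounded_family d (F k)"
    using assms(3) unfolding sf_def by (elim exE conjE) blast
  define G where "G = (\<lambda>i. if i = 0 then \<X> else F (i - 1))"
  have g0: "G 0 = \<X>" by (simp add: G_def)
  have g1: "\<forall>i\<le>Suc k. G i \<subseteq> Pow M"
  proof (intro allI impI)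
    fix i assume "i \<le> Suc k"
    then show "G i \<subseteq> Pow M" using F(2) assms(2) unfolding G_def
      by (cases i) simp_all
  qed
  moreover have g2: "\<forall>i\<in>{1..Suc k}. r_decomposable d (R i) (G (i - 1)) (G i)"
  proof
    fix i assume i: "i \<in> {1..Suc k}"
    show "r_decomposable d (R i) (G (i - 1)) (G i)"
    proof (cases "i = 1")
      case True thus ?thesis using assms(1) F(1) by (simp add: G_def)
    next
      case False
      then have "i - 1 \<in> {1..k}" using i by auto
      from F(3)[rule_format, OF this] False i show ?thesis
        by (simp add: G_def)
    qed
  qed
  moreover have g3: "bounded_family d (G (Suc k))" using F(4) by (simp add: G_def)
  show ?thesis unfolding sf_def
    by (rule exI[of _ "Suc k"], rule exI[of _ G]) (intro conjI g0 g1 g2 g3)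
qed

lemma rdisj_single: "r_disjoint d r {W}"
  unfolding r_disjoint_def by simp

lemma Dk_lemma:
  "Dk d (Suc k) R \<X> \<Y> \<Longrightarrow> \<X> \<subseteq> Pow M \<Longrightarrow> \<Y> \<subseteq> Pow M \<Longrightarrow>
   sf M d \<Y> (\<lambda>i. R (i + Suc k)) \<Longrightarrow> sf M d \<X> R"
proof (induction k arbitrary: R \<X>)
  case 0
  have "r_decomposable d (R 1) \<X> \<Y>"
    unfolding r_decomposable_def
  proof
    fix X assume "X \<in> \<X>"
    then obtain U where U: "U 1 \<subseteq> \<Y>" "r_disjoint d (R 1) (U 1)" "\<Union>(U 1) = X"
      using "0.prems"(1) unfolding Dk_def by auto
    show "\<exists>X0 X1. X = X0 \<union> X1 \<and> (\<exists>\<U>\<subseteq>\<Y>. r_disjoint d (R 1) \<U> \<and> X0 = \<Union> \<U>) \<and>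
        (\<exists>\<U>\<subseteq>\<Y>. r_disjoint d (R 1) \<U> \<and> X1 = \<Union> \<U>)"
      using U by (intro exI[of _ X]) auto
  qed
  moreover have "sf M d \<Y> (\<lambda>i. R (Suc i))" using "0.prems"(4) by simp
  ultimately show ?case using sf_compose "0.prems"(2) by blast
next
  case (Suc k)
  define W where "W = {\<Union>(\<Union>i\<in>{2..Suc (Suc k)}. U i) | U.
      \<forall>i\<in>{2..Suc (Suc k)}. U i \<subseteq> \<Y> \<and> r_disjoint d (R i) (U i)}"
  define X' where "X' = \<Y> \<union> W"
  have X'M: "X' \<subseteq> Pow M" using Suc.prems(3) by (auto simp: X'_def W_def)
  have "r_decomposable d (R 1) \<X> X'"
    unfolding r_decomposable_def
  proof
    fix X assume "X \<in> \<X>"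
    from bspec[OF Suc.prems(1)[unfolded Dk_def] this]
    obtain U where U: "\<forall>i\<in>{1..Suc (Suc k)}. U i \<subseteq> \<Y> \<and> r_disjoint d (R i) (U i)"
      "\<Union>(\<Union>i\<in>{1..Suc (Suc k)}. U i) = X"
      by (elim exE conjE)
    define w where "w = \<Union>(\<Union>i\<in>{2..Suc (Suc k)}. U i)"
    have wW: "w \<in> W" unfolding W_def w_def
      by (rule CollectI, rule exI[of _ U]) (use U(1) in auto)
    have "{1..Suc (Suc k)} = insert 1 {2..Suc (Suc k)}" by auto
    then have "X = \<Union>(U 1) \<union> w" using U(2) by (auto simp: w_def)
    moreover have "U 1 \<subseteq> X'" "r_disjoint d (R 1) (U 1)" using U(1) by (auto simp: X'_def)
    moreover have "{w} \<subseteq> X'" using wW by (auto simp: X'_def)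
    ultimately have A0: "X = \<Union>(U 1) \<union> w" and u1: "U 1 \<subseteq> X'" "r_disjoint d (R 1) (U 1)"
      and ww: "{w} \<subseteq> X'" by blast+
    have A1: "\<exists>\<U>\<subseteq>X'. r_disjoint d (R 1) \<U> \<and> \<Union>(U 1) = \<Union> \<U>"
      by (rule exI[of _ "U 1"]) (use u1 in blast)
    have A2: "\<exists>\<U>\<subseteq>X'. r_disjoint d (R 1) \<U> \<and> w = \<Union> \<U>"
      by (rule exI[of _ "{w}"]) (use ww rdisj_single in blast)
    show "\<exists>X0 X1. X = X0 \<union> X1 \<and> (\<exists>\<U>\<subseteq>X'. r_disjoint d (R 1) \<U> \<and> X0 = \<Union> \<U>) \<and>
        (\<exists>\<U>\<subseteq>X'. r_disjoint d (R 1) \<U> \<and> X1 = \<Union> \<U>)"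
      by (rule exI[of _ "\<Union>(U 1)"], rule exI[of _ w]) (intro conjI A0 A1 A2)
  qed
  moreover have "sf M d X' (\<lambda>i. R (Suc i))"
  proof (rule Suc.IH)
    show "Dk d (Suc k) (\<lambda>i. R (Suc i)) X' \<Y>"
      unfolding Dk_def
    proof
      fix Z assume "Z \<in> X'"
      then consider "Z \<in> \<Y>" | "Z \<in> W" unfolding X'_def by blast
      then show "\<exists>U. (\<forall>i\<in>{1..Suc k}. U i \<subseteq> \<Y> \<and> r_disjoint d (R (Suc i)) (U i)) \<and>
                \<Union> (\<Union> (U ` {1..Suc k})) = Z"
      proof cases
        case 1
        define U :: "nat \<Rightarrow> 'a set set" where "U = (\<lambda>i. if i = 1 then {Z} else {})"
        have "\<Union> (\<Union> (U ` {1..Suc k})) = Z" unfolding U_def by auto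
        moreover have "\<forall>i\<in>{1..Suc k}. U i \<subseteq> \<Y> \<and> r_disjoint d (R (Suc i)) (U i)"
          using 1 by (auto simp: U_def rdisj_single r_disjoint_def)
        ultimately show ?thesis by blast
      next
        case 2
        then obtain U where U: "\<forall>i\<in>{2..Suc (Suc k)}. U i \<subseteq> \<Y> \<and> r_disjoint d (R i) (U i)"
          "Z = \<Union>(\<Union>i\<in>{2..Suc (Suc k)}. U i)" unfolding W_def by blast
        have e: "(\<Union>i\<in>{1..Suc k}. U (Suc i)) = (\<Union>i\<in>{2..Suc (Suc k)}. U i)"
        proof -
          have "{2..Suc (Suc k)} = Suc ` {1..Suc k}" by (simp add: image_Suc_atLeastAtMost)
          thus ?thesis by (simp only: image_image)
        qed
        have "\<forall>i\<in>{1..Suc k}. U (Suc i) \<subseteq> \<Y> \<and> r_disjoint d (R (Suc i)) (U (Suc i))"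
          using U(1) by auto
        with e U(2) show ?thesis by (intro exI[of _ "\<lambda>i. U (Suc i)"]) auto
      qed
    qed
    show "X' \<subseteq> Pow M" by (rule X'M)
    show "\<Y> \<subseteq> Pow M" by (rule Suc.prems(3))
    show "sf M d \<Y> (\<lambda>i. R (Suc (i + Suc k)))" using Suc.prems(4) by simp
  qed
  ultimately show ?case using sf_compose Suc.prems(2) by blast
qed

lemma APC_sf: "APC M d \<X> \<Longrightarrow> \<X> \<subseteq> Pow M \<and> (\<forall>R. sf M d \<X> R)"
proof (induction rule: APC.induct)
  case (bounded \<X>)
  then show ?case using sf_bounded by blast
next
  case (step \<X>)
  have "sf M d \<X> R" for R
  proof -
    from step.IH[of R] obtain \<Y> where Y: "\<Y> \<subseteq> Pow M" "\<forall>R. sf M d \<Y> R" "decomp_arrow d \<X> R \<Y>"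
      by (elim exE conjE) blast
    from Y(3) obtain k where k: "\<forall>X\<in>\<X>. \<exists>\<U> :: nat \<Rightarrow> 'a set set.
        (\<forall>i\<in>{1..k}. \<U> i \<subseteq> \<Y> \<and> (\<forall>V\<in>\<U> i. V \<subseteq> X) \<and> r_disjoint d (R i) (\<U> i))
        \<and> \<Union>(\<Union>i\<in>{1..k}. \<U> i) = X"
      unfolding decomp_arrow_def by (elim exE) blast
    have "Dk d (Suc k) R \<X> \<Y>"
      unfolding Dk_def
    proof
      fix X assume "X \<in> \<X>"
      from bspec[OF k this] obtain U :: "nat \<Rightarrow> 'a set set" where U:
        "\<forall>i\<in>{1..k}. U i \<subseteq> \<Y> \<and> (\<forall>V\<in>U i. V \<subseteq> X) \<and> r_disjoint d (R i) (U i)"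
        "\<Union>(\<Union>i\<in>{1..k}. U i) = X"
        by (elim exE conjE)
      define U' where "U' = (\<lambda>i. if i \<le> k then U i else {})"
      have e1: "{1..Suc k} = insert (Suc k) {1..k}" by auto
      have e2: "(\<Union>i\<in>{1..k}. U' i) = (\<Union>i\<in>{1..k}. U i)"
        by (rule SUP_cong) (simp_all add: U'_def)
      have u1: "(\<Union>i\<in>{1..Suc k}. U' i) = (\<Union>i\<in>{1..k}. U i)"
        unfolding e1 UN_insert e2 by (simp add: U'_def)
      have u2: "\<forall>i\<in>{1..Suc k}. U' i \<subseteq> \<Y> \<and> r_disjoint d (R i) (U' i)"
      proof
        fix i assume i: "i \<in> {1..Suc k}"
        show "U' i \<subseteq> \<Y> \<and> r_disjoint d (R i) (U' i)"
        proof (cases "i \<le> k")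
          case True
          then have "i \<in> {1..k}" using i by simp
          then show ?thesis using U(1) True by (simp add: U'_def)
        next
          case False
          then show ?thesis by (simp add: U'_def r_disjoint_def)
        qed
      qed
      show "\<exists>U. (\<forall>i\<in>{1..Suc k}. U i \<subseteq> \<Y> \<and> r_disjoint d (R i) (U i)) \<and>
          \<Union> (\<Union> (U ` {1..Suc k})) = X"
        by (rule exI[of _ U'], rule conjI, rule u2) (simp only: u1 U(2))
    qed
    then show ?thesis by (rule Dk_lemma[OF _ step.hyps(1) Y(1) Y(2)[rule_format]])
  qed
  then show ?case using step.hyps(1) by blast
qed

lemma sf_subset:
  assumes "sf M d \<X> R" "\<X>0 \<subseteq> \<X>"
  shows "sf M d \<X>0 R"
proof -
  obtain k F where F: "F 0 = \<X>" "\<forall>i\<le>k. F i \<subseteq> Pow M"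
    "\<forall>i\<in>{1..k}. r_decomposable d (R i) (F (i - 1)) (F i)" "bounded_family d (F k)"
    using assms(1) unfolding sf_def by (elim exE conjE) blast
  define G where "G = F(0 := \<X>0)"
  have g0: "G 0 = \<X>0" by (simp add: G_def)
  have g1: "\<forall>i\<le>k. G i \<subseteq> Pow M" using F(1,2) assms(2) by (auto simp: G_def)
  moreover have g2: "\<forall>i\<in>{1..k}. r_decomposable d (R i) (G (i - 1)) (G i)"
  proof
    fix i assume i: "i \<in> {1..k}"
    have "r_decomposable d (R i) (F (i - 1)) (F i)" using F(3) i by blast
    moreover have "G (i - 1) \<subseteq> F (i - 1)" "G i = F i" using i assms(2) F(1) by (auto simp: G_def)
    ultimately show "r_decomposable d (R i) (G (i - 1)) (G i)"
      unfolding r_decomposable_def by auto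
  qed
  moreover have g3: "bounded_family d (G k)"
  proof (cases "k = 0")
    case True
    then have gk: "G k = \<X>0" by (simp add: G_def)
    from F(4) True F(1) obtain B where "\<forall>X\<in>\<X>. \<forall>x\<in>X. \<forall>y\<in>X. d x y \<le> B"
      unfolding bounded_family_def by auto
    then show ?thesis unfolding gk bounded_family_def using assms(2) by blast
  next
    case False
    then show ?thesis using F(4) by (simp add: G_def)
  qed
  show ?thesis unfolding sf_def
    by (rule exI[of _ k], rule exI[of _ G]) (intro conjI g0 g1 g2 g3)
qed

theorem mainTheorem20:
  fixes M :: "'a set" and d :: "'a \<Rightarrow> 'a \<Rightarrow> real" and X :: "'a set"
  assumes "Metric_space M d"
    and "X \<subseteq> M"
    and "finite_APC_complexity M d X"
  shows "straight_FDC M d {X}"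
proof -
  obtain \<X> where X: "\<X> \<subseteq> Pow M" "X \<in> \<X>" "APC M d \<X>"
    using assms(3) unfolding finite_APC_complexity_def by blast
  have "sf M d {X} R" for R
  proof (rule sf_subset)
    show "sf M d \<X> R" using APC_sf[OF X(3)] by blast
    show "{X} \<subseteq> \<X>" using X(2) by simp
  qed
  moreover have "straight_FDC M d {X} \<longleftrightarrow> (\<forall>R. sf M d {X} R)"
    unfolding straight_FDC_def sf_def by (rule refl)
  ultimately show ?thesis by blast
qed

end
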